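(* Let $n\ge 4$. Each of the following representations $\varepsilon_j:UV_n(2)\to\mathrm{GL}_{n+1}(\mathbb{C})$, $1\le j\le 4$, is reducible: $\varepsilon_j(\rho_i)=\mathrm{diag}(I_{i-1},R^{(j)},I_{n-i-1})$, $\varepsilon_j(\sigma_{i,t})=\mathrm{diag}(I_{i-1},S_t^{(j)},I_{n-i-1})$ for $1\le i\le n-1$, $t\in\{1,2\}$, where (1) $R^{(1)}=\begin{pmatrix}1&0&0\\0&0&r_6\\0&\frac1{r_6}&0\end{pmatrix}$, $S_t^{(1)}=\begin{pmatrix}1&0&0\\0&s_{5,t}&s_{6,t}\\0&s_{8,t}&s_{9,t}\end{pmatrix}$, with $r_6\ne0$, $s_{5,t}s_{9,t}-s_{6,t}s_{8,t}\ne0$; (2) $R^{(2)}=\begin{pmatrix}0&r_2&0\\ \frac1{r_2}&0&0\\0&0&1\end{pmatrix}$, $S_t^{(2)}=\begin{pmatrix}s_{1,t}&s_{2,t}&0\\ s_{4,t}&s_{5,t}&0\\0&0&1\end{pmatrix}$, with $r_2\ne0$, $s_{1,t}s_{5,t}-s_{2,t}s_{4,t}\ne0$; (3) $R^{(3)}=\begin{pmatrix}1&0&0\\ \frac1{r_6}&-1&r_6\\0&0&1\end{pmatrix}$, $S_t^{(3)}=\begin{pmatrix}1&0&0\\ s_{4,t}&s_{5,t}&r_6(1-r_6s_{4,t}-s_{5,t})\\0&0&1\end{pmatrix}$, with $r_6\ne0$, $s_{5,t}\ne0$; (4) $R^{(4)}=\begin{pmatrix}1&r_2&0\\0&-1&0\\0&\frac1{r_2}&1\end{pmatrix}$,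 $S_t^{(4)}=\begin{pmatrix}1&r_2(1-s_{5,t}-r_2s_{8,t})&0\\0&s_{5,t}&0\\0&s_{8,t}&1\end{pmatrix}$, with $r_2\ne0$, $s_{5,t}\ne0$. All parameters are complex numbers.
   Context: $UV_n(c)$ is the group with generators $\rho_i$ ($1\le i\le n-1$), $\sigma_{i,t}$ ($1\le i\le n-1$, $1\le t\le c$) and relations $\rho_i\rho_{i+1}\rho_i=\rho_{i+1}\rho_i\rho_{i+1}$, $\rho_i\rho_j=\rho_j\rho_i$ ($|i-j|\ge2$), $\rho_i^2=1$, $\sigma_{i,t}\sigma_{j,\ell}=\sigma_{j,\ell}\sigma_{i,t}$ ($|i-j|\ge2$), $\sigma_{i,t}\rho_j=\rho_j\sigma_{i,t}$ ($|i-j|\ge2$), $\rho_i\rho_{i+1}\sigma_{i,t}=\sigma_{i+1,t}\rho_i\rho_{i+1}$ ($1\le i\le n-2$). The displayed assignments define representations of $UV_n(2)$. $\mathrm{diag}$ denotes a block diagonal matrix, $I_r$ the $r\times r$ identity. Reducible means there is a nonzero proper subspace of $\mathbb{C}^{n+1}$ invariant under all image matrices. *)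

theory Defs
  imports "Jordan_Normal_Form.Matrix"
begin

(* block diagonal matrix diag(I_{i-1}, M, I_{n-i-1}) of size (n+1)x(n+1), M a 3x3 matrix,
   i counted from 1 as in the paper; matrix indices are 0-based *)
definition blk :: "nat \<Rightarrow> nat \<Rightarrow> complex mat \<Rightarrow> complex mat" where
  "blk n i M = mat (n+1) (n+1) (\<lambda>(a,b).
     if i - 1 \<le> a \<and> a < i + 2 \<and> i - 1 \<le> b \<and> b < i + 2
     then M $$ (a - (i - 1), b - (i - 1))
     else if a = b then 1 else 0)"

definition gens :: "nat \<Rightarrow> complex mat \<Rightarrow> (nat \<Rightarrow> complex mat) \<Rightarrow> complex mat set" where
  "gens n R S = {blk n i R | i. 1 \<le> i \<and> i \<le> n - 1}
              \<union> {blk n i (S t) | i t. 1 \<le> i \<and> i \<le> n - 1 \<and> t \<in> {1,2}}"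

inductive_set gen_group :: "nat \<Rightarrow> complex mat set \<Rightarrow> complex mat set"
  for N :: nat and G :: "complex mat set" where
  one: "1\<^sub>m N \<in> gen_group N G"
| mult: "A \<in> gen_group N G \<Longrightarrow> g \<in> G \<Longrightarrow> g * A \<in> gen_group N G"
| inv: "A \<in> gen_group N G \<Longrightarrow> g \<in> G \<Longrightarrow> B \<in> carrier_mat N N \<Longrightarrow> B * g = 1\<^sub>m N
        \<Longrightarrow> B * A \<in> gen_group N G"

definition rep_image :: "nat \<Rightarrow> complex mat \<Rightarrow> (nat \<Rightarrow> complex mat) \<Rightarrow> complex mat set" where
  "rep_image n R S = gen_group (n+1) (gens n R S)"

definition is_subspace :: "nat \<Rightarrow> complex vec set \<Rightarrow> bool" where
  "is_subspace N W \<longleftrightarrow> W \<subseteq> carrier_vec N \<and> 0\<^sub>v N \<in> W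
     \<and> (\<forall>v\<in>W. \<forall>w\<in>W. v + w \<in> W) \<and> (\<forall>c. \<forall>v\<in>W. c \<cdot>\<^sub>v v \<in> W)"

definition reducible :: "nat \<Rightarrow> complex mat set \<Rightarrow> bool" where
  "reducible N G \<longleftrightarrow> (\<exists>W. is_subspace N W \<and> W \<noteq> {0\<^sub>v N} \<and> W \<noteq> carrier_vec N
     \<and> (\<forall>A\<in>G. \<forall>w\<in>W. A *\<^sub>v w \<in> W))"

definition R1 :: "complex \<Rightarrow> complex mat" where
  "R1 r6 = mat_of_rows_list 3 [[1,0,0],[0,0,r6],[0,1/r6,0]]"
definition S1 :: "complex \<Rightarrow> complex \<Rightarrow> complex \<Rightarrow> complex \<Rightarrow> complex mat" where
  "S1 s5 s6 s8 s9 = mat_of_rows_list 3 [[1,0,0],[0,s5,s6],[0,s8,s9]]"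
definition R2 :: "complex \<Rightarrow> complex mat" where
  "R2 r2 = mat_of_rows_list 3 [[0,r2,0],[1/r2,0,0],[0,0,1]]"
definition S2 :: "complex \<Rightarrow> complex \<Rightarrow> complex \<Rightarrow> complex \<Rightarrow> complex mat" where
  "S2 s1 s2 s4 s5 = mat_of_rows_list 3 [[s1,s2,0],[s4,s5,0],[0,0,1]]"
definition R3 :: "complex \<Rightarrow> complex mat" where
  "R3 r6 = mat_of_rows_list 3 [[1,0,0],[1/r6,-1,r6],[0,0,1]]"
definition S3 :: "complex \<Rightarrow> complex \<Rightarrow> complex \<Rightarrow> complex mat" where
  "S3 r6 s4 s5 = mat_of_rows_list 3 [[1,0,0],[s4,s5,r6*(1-r6*s4-s5)],[0,0,1]]"
definition R4 :: "complex \<Rightarrow> complex mat" where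
  "R4 r2 = mat_of_rows_list 3 [[1,r2,0],[0,-1,0],[0,1/r2,1]]"
definition S4 :: "complex \<Rightarrow> complex \<Rightarrow> complex \<Rightarrow> complex mat" where
  "S4 r2 s5 s8 = mat_of_rows_list 3 [[1,r2*(1-s5-r2*s8),0],[0,s5,0],[0,s8,1]]"

end

theory Submission
  imports Defs
begin

lemma gen_fix:
  assumes v: "v \<in> carrier_vec N" and G: "\<forall>g\<in>G. g \<in> carrier_mat N N \<and> g *\<^sub>v v = v"
  and A: "A \<in> gen_group N G"
  shows "A \<in> carrier_mat N N \<and> A *\<^sub>v v = v"
  using A
proof (induction rule: gen_group.induct)
  case one
  then show ?case using v by simp
next
  case (mult A g)
  then show ?case using G v by auto
next
  case (inv A g B)
  have g: "g \<in> carrier_mat N N" "g *\<^sub>v v = v" using G inv by auto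
  have "(B * A) *\<^sub>v v = B *\<^sub>v v" using inv v by auto
  also have "\<dots> = B *\<^sub>v (g *\<^sub>v v)" using g by simp
  also have "\<dots> = (B * g) *\<^sub>v v" using assoc_mult_mat_vec[of B N N g N v] inv g v by argo
  also have "\<dots> = v" using inv v by simp
  finally show ?case using inv by auto
qed

lemma fixed_reducible:
  assumes v: "v \<in> carrier_vec N" and nz: "v \<noteq> 0\<^sub>v N" and N: "N \<ge> 2"
  and G: "\<forall>g\<in>G. g \<in> carrier_mat N N \<and> g *\<^sub>v v = v"
  shows "reducible N (gen_group N G)"
proof -
  define W where "W = range (\<lambda>c. c \<cdot>\<^sub>v v)"
  have sub: "is_subspace N W"
    unfolding is_subspace_def W_def
  proof (intro conjI ballI allI)
    show "range (\<lambda>c. c \<cdot>\<^sub>v v) \<subseteq> carrier_vec N" using v by auto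
    have "0\<^sub>v N = 0 \<cdot>\<^sub>v v" using v by auto
    then show "0\<^sub>v N \<in> range (\<lambda>c. c \<cdot>\<^sub>v v)" by blast
    fix x y assume "x \<in> range (\<lambda>c. c \<cdot>\<^sub>v v)" "y \<in> range (\<lambda>c. c \<cdot>\<^sub>v v)"
    then obtain a b where "x = a \<cdot>\<^sub>v v" "y = b \<cdot>\<^sub>v v" by auto
    then have "x + y = (a + b) \<cdot>\<^sub>v v" by (simp add: add_smult_distrib_vec)
    then show "x + y \<in> range (\<lambda>c. c \<cdot>\<^sub>v v)" by blast
  next
    fix c x assume "x \<in> range (\<lambda>c. c \<cdot>\<^sub>v v)"
    then obtain a where "x = a \<cdot>\<^sub>v v" by auto
    then have "c \<cdot>\<^sub>v x = (c * a) \<cdot>\<^sub>v v" by (simp add: smult_smult_assoc)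
    then show "c \<cdot>\<^sub>v x \<in> range (\<lambda>c. c \<cdot>\<^sub>v v)" by blast
  qed
  have "v = 1 \<cdot>\<^sub>v v" by simp
  then have vW: "v \<in> W" unfolding W_def by blast
  have ne0: "W \<noteq> {0\<^sub>v N}" using vW nz by auto
  obtain j where j: "j < N" "v $ j \<noteq> 0" using nz v by (metis eq_vecI carrier_vecD index_zero_vec)
  define k where "k = (if j = 0 then 1 else 0::nat)"
  have k: "k < N" "k \<noteq> j" using N j unfolding k_def by auto
  have "unit_vec N k \<notin> W"
  proof
    assume "unit_vec N k \<in> W"
    then obtain c where c: "unit_vec N k = c \<cdot>\<^sub>v v" unfolding W_def by auto
    have "0 = c * v $ j" using arg_cong[OF c, of "\<lambda>x. x $ j"] j k v by auto
    then have "c = 0" using j by simp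
    then show False using arg_cong[OF c, of "\<lambda>x. x $ k"] k v by auto
  qed
  then have nec: "W \<noteq> carrier_vec N" using k by auto
  have inv: "\<forall>A\<in>gen_group N G. \<forall>w\<in>W. A *\<^sub>v w \<in> W"
  proof (intro ballI)
    fix A w assume A: "A \<in> gen_group N G" and w: "w \<in> W"
    then obtain c where "w = c \<cdot>\<^sub>v v" unfolding W_def by auto
    moreover have "A \<in> carrier_mat N N \<and> A *\<^sub>v v = v" using gen_fix[OF v G A] .
    ultimately have "A *\<^sub>v w = w" using mult_mat_vec v by metis
    then show "A *\<^sub>v w \<in> W" using w by simp
  qed
  show ?thesis unfolding reducible_def using sub ne0 nec inv by blast
qed


lemma sum3: "(\<Sum>k::nat<3. f k) = f 0 + f 1 + (f 2 :: complex)"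
  by (simp add: numeral_3_eq_3 numeral_2_eq_2)

lemma blk_carrier: "blk n i M \<in> carrier_mat (n+1) (n+1)"
  unfolding blk_def by simp

lemma blk_mult:
  assumes i: "1 \<le> i" "i + 1 \<le> n" and v: "v \<in> carrier_vec (n+1)" and a: "a < n+1"
  shows "(blk n i M *\<^sub>v v) $ a = (if i - 1 \<le> a \<and> a < i + 2
     then (\<Sum>k<3. M $$ (a - (i - 1), k) * v $ (i - 1 + k)) else v $ a)"
proof -
  have e: "(blk n i M *\<^sub>v v) $ a = (\<Sum>b\<in>{0..<n+1}. blk n i M $$ (a, b) * v $ b)"
    using a v unfolding blk_def by (simp add: scalar_prod_def)
  show ?thesis
  proof (cases "i - 1 \<le> a \<and> a < i + 2")
    case True
    have "(\<Sum>b\<in>{0..<n+1}. blk n i M $$ (a, b) * v $ b)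
        = (\<Sum>b\<in>{i-1..<i+2}. blk n i M $$ (a, b) * v $ b)"
      using i a True by (intro sum.mono_neutral_right) (auto simp: blk_def)
    also have "\<dots> = (\<Sum>b\<in>{i-1..<i+2}. M $$ (a - (i - 1), b - (i - 1)) * v $ b)"
      using i a True by (intro sum.cong) (auto simp: blk_def)
    also have "{i-1..<i+2} = (\<lambda>k. i - 1 + k) ` {..<3}"
    proof -
      have "{i-1..<i+2} = {i-1..<i-1+3}" using i by simp
      then show ?thesis by (simp add: image_add_atLeastLessThan lessThan_atLeast0 add.commute)
    qed
    also have "(\<Sum>b\<in>(\<lambda>k. i - 1 + k) ` {..<3}. M $$ (a - (i - 1), b - (i - 1)) * v $ b)
       = (\<Sum>k<3. M $$ (a - (i - 1), k) * v $ (i - 1 + k))"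
      by (subst sum.reindex) (auto simp: inj_on_def)
    finally show ?thesis using e True by simp
  next
    case False
    have "(\<Sum>b\<in>{0..<n+1}. blk n i M $$ (a, b) * v $ b)
        = (\<Sum>b\<in>{0..<n+1}. (if b = a then v $ a else 0))"
      using i a False by (intro sum.cong) (auto simp: blk_def)
    also have "\<dots> = v $ a" using a by simp
    finally have "(blk n i M *\<^sub>v v) $ a = v $ a" using e by simp
    then show ?thesis by (simp only: if_not_P[OF False])
  qed
qed

lemma blk_fix:
  assumes i: "1 \<le> i" "i + 1 \<le> n" and v: "v \<in> carrier_vec (n+1)"
  and loc: "\<And>a'. a' < 3 \<Longrightarrow> (\<Sum>k<3. M $$ (a', k) * v $ (i - 1 + k)) = v $ (i - 1 + a')"
  shows "blk n i M *\<^sub>v v = v"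
proof (rule eq_vecI)
  show "dim_vec (blk n i M *\<^sub>v v) = dim_vec v" using v blk_carrier[of n i M] by simp
  fix a assume "a < dim_vec v"
  then have a: "a < n + 1" using v by simp
  show "(blk n i M *\<^sub>v v) $ a = v $ a"
  proof (cases "i - 1 \<le> a \<and> a < i + 2")
    case True
    then have "a = i - 1 + (a - (i - 1))" "a - (i - 1) < 3" by auto
    then show ?thesis using blk_mult[OF i v a] True loc[of "a - (i - 1)"] by simp
  next
    case False
    then show ?thesis using blk_mult[OF i v a, of M] by (simp only: if_not_P[OF False] if_False)
  qed
qed


lemma cases3: "(a::nat) < 3 \<Longrightarrow> a = 0 \<or> a = 1 \<or> a = 2" by auto

lemma loc_e0:
  fixes M :: "complex mat"
  assumes "M$$(0,0)=1" "M$$(1,0)=0" "M$$(2,0)=0" "1\<le>i" "i+1\<le>n" "a'<3"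
  shows "(\<Sum>k<3. M$$(a',k) * unit_vec (n+1) 0 $ (i-1+k)) = unit_vec (n+1) 0 $ (i-1+a')"
proof (cases "i = 1")
  case True
  then show ?thesis using assms cases3[OF assms(6)] by (auto simp: sum3)
next
  case False
  then show ?thesis using assms by (auto simp: sum3)
qed

lemma loc_en:
  fixes M :: "complex mat"
  assumes "M$$(0,2)=0" "M$$(1,2)=0" "M$$(2,2)=1" "1\<le>i" "i+1\<le>n" "a'<3"
  shows "(\<Sum>k<3. M$$(a',k) * unit_vec (n+1) n $ (i-1+k)) = unit_vec (n+1) n $ (i-1+a')"
proof (cases "i + 1 = n")
  case True
  then show ?thesis using assms cases3[OF assms(6)] by (auto simp: sum3)
next
  case False
  then show ?thesis using assms by (auto simp: sum3)
qed

lemma gens_fix: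
  assumes v: "v \<in> carrier_vec (n+1)"
  and hR: "\<And>i a'. 1 \<le> i \<Longrightarrow> i + 1 \<le> n \<Longrightarrow> a' < 3 \<Longrightarrow>
     (\<Sum>k<3. R $$ (a', k) * v $ (i - 1 + k)) = v $ (i - 1 + a')"
  and hS: "\<And>i a' t. 1 \<le> i \<Longrightarrow> i + 1 \<le> n \<Longrightarrow> a' < 3 \<Longrightarrow> t \<in> {1,2} \<Longrightarrow>
     (\<Sum>k<3. S t $$ (a', k) * v $ (i - 1 + k)) = v $ (i - 1 + a')"
  shows "\<forall>g\<in>gens n R S. g \<in> carrier_mat (n+1) (n+1) \<and> g *\<^sub>v v = v"
proof
  fix g assume "g \<in> gens n R S"
  then consider (r) i where "g = blk n i R" "1 \<le> i" "i \<le> n - 1"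
    | (s) i t where "g = blk n i (S t)" "1 \<le> i" "i \<le> n - 1" "t \<in> {1,2}"
    unfolding gens_def by blast
  then show "g \<in> carrier_mat (n+1) (n+1) \<and> g *\<^sub>v v = v"
  proof cases
    case r
    then have i: "1 \<le> i" "i + 1 \<le> n" by auto
    show ?thesis using r(1) blk_carrier blk_fix[OF i v hR[OF i]] by simp
  next
    case s
    then have i: "1 \<le> i" "i + 1 \<le> n" by auto
    show ?thesis using s(1) blk_carrier blk_fix[OF i v hS[OF i _ s(4)]] by simp
  qed
qed


lemma loc3:
  fixes M :: "complex mat" and r :: complex
  assumes "M$$(0,0)=1" "M$$(0,1)=0" "M$$(0,2)=0" "M$$(2,0)=0" "M$$(2,1)=0" "M$$(2,2)=1"
    and mid: "M$$(1,0)*r^2 + M$$(1,1)*r + M$$(1,2) = r"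
    and i: "1\<le>i" "i+1\<le>n" and a: "a'<3"
  shows "(\<Sum>k<3. M$$(a',k) * vec (n+1) (\<lambda>b. r^(n-b)) $ (i-1+k)) = vec (n+1) (\<lambda>b. r^(n-b)) $ (i-1+a')"
proof -
  obtain q where q: "n = i + 1 + q" using i le_Suc_ex by (metis add.commute)
  have idx: "n - (i - 1) = q + 2" "n - (i - 1 + 1) = q + 1" "n - (i - 1 + 2) = q"
    using q i by auto
  have h: "vec (n+1) (\<lambda>b. r^(n-b)) $ (i-1+k) = r^(n-(i-1+k))" if "k < 3" for k
    by (subst index_vec) (use that i in auto)
  have v: "vec (n+1) (\<lambda>b. r^(n-b)) $ (i-1) = r^(q+2)"
     "vec (n+1) (\<lambda>b. r^(n-b)) $ (i-1+1) = r^(q+1)"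
     "vec (n+1) (\<lambda>b. r^(n-b)) $ (i-1+2) = r^q"
    using h[of 0] h[of 1] h[of 2] idx by simp_all
  have m: "M$$(1,0)*r^(q+2) + M$$(1,1)*r^(q+1) + M$$(1,2)*r^q = r^(q+1)"
  proof -
    have "M$$(1,0)*r^(q+2) + M$$(1,1)*r^(q+1) + M$$(1,2)*r^q
        = (M$$(1,0)*r^2 + M$$(1,1)*r + M$$(1,2)) * r^q" by (simp add: power_add power2_eq_square ring_distribs mult_ac)
    also have "\<dots> = r^(q+1)" using mid by simp
    finally show ?thesis .
  qed
  show ?thesis using cases3[OF a] assms v m unfolding sum3 by auto
qed

lemma vec_r_ok: "vec (n+1) (\<lambda>b. (r::complex)^(n-b)) \<in> carrier_vec (n+1)"
  "vec (n+1) (\<lambda>b. (r::complex)^(n-b)) \<noteq> 0\<^sub>v (n+1)"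
proof -
  show "vec (n+1) (\<lambda>b. (r::complex)^(n-b)) \<in> carrier_vec (n+1)" by simp
  show "vec (n+1) (\<lambda>b. (r::complex)^(n-b)) \<noteq> 0\<^sub>v (n+1)"
  proof
    assume h: "vec (n+1) (\<lambda>b. (r::complex)^(n-b)) = 0\<^sub>v (n+1)"
    have "vec (n+1) (\<lambda>b. (r::complex)^(n-b)) $ n = 0\<^sub>v (n+1) $ n" by (subst h) simp
    then show False by simp
  qed
qed


lemma case1: assumes "n \<ge> 4"
  shows "reducible (n+1) (rep_image n (R1 r6) (\<lambda>t. S1 (s5 t) (s6 t) (s8 t) (s9 t)))"
proof -
  have N: "n + 1 \<ge> 2" using assms by simp
  have e0: "unit_vec (n+1) 0 \<in> carrier_vec (n+1)" "unit_vec (n+1) 0 \<noteq> 0\<^sub>v (n+1)"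
    by (auto simp: unit_vec_def zero_vec_def vec_eq_iff)
  have R: "R1 r6 $$ (0,0) = 1" "R1 r6 $$ (1,0) = 0" "R1 r6 $$ (2,0) = 0"
    by (simp_all add: R1_def mat_of_rows_list_def)
  have S: "S1 a b c d $$ (0,0) = 1" "S1 a b c d $$ (1,0) = 0" "S1 a b c d $$ (2,0) = 0" for a b c d
    by (simp_all add: S1_def mat_of_rows_list_def)
  show ?thesis unfolding rep_image_def
    by (intro fixed_reducible[OF e0 N] gens_fix[OF e0(1)] loc_e0[OF R] loc_e0[OF S])
qed

lemma case4: assumes "n \<ge> 4"
  shows "reducible (n+1) (rep_image n (R4 r2) (\<lambda>t. S4 r2 (s5 t) (s8 t)))"
proof -
  have N: "n + 1 \<ge> 2" using assms by simp
  have e0: "unit_vec (n+1) 0 \<in> carrier_vec (n+1)" "unit_vec (n+1) 0 \<noteq> 0\<^sub>v (n+1)"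
    by (auto simp: unit_vec_def zero_vec_def vec_eq_iff)
  have R: "R4 r2 $$ (0,0) = 1" "R4 r2 $$ (1,0) = 0" "R4 r2 $$ (2,0) = 0"
    by (simp_all add: R4_def mat_of_rows_list_def)
  have S: "S4 r2 a b $$ (0,0) = 1" "S4 r2 a b $$ (1,0) = 0" "S4 r2 a b $$ (2,0) = 0" for a b
    by (simp_all add: S4_def mat_of_rows_list_def)
  show ?thesis unfolding rep_image_def
    by (intro fixed_reducible[OF e0 N] gens_fix[OF e0(1)] loc_e0[OF R] loc_e0[OF S])
qed

lemma case2: assumes "n \<ge> 4"
  shows "reducible (n+1) (rep_image n (R2 r2) (\<lambda>t. S2 (s1 t) (s2 t) (s4 t) (s5 t)))"
proof -
  have N: "n + 1 \<ge> 2" using assms by simp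
  have en: "unit_vec (n+1) n \<in> carrier_vec (n+1)" "unit_vec (n+1) n \<noteq> 0\<^sub>v (n+1)"
    by (auto simp: unit_vec_def zero_vec_def vec_eq_iff)
  have R: "R2 r2 $$ (0,2) = 0" "R2 r2 $$ (1,2) = 0" "R2 r2 $$ (2,2) = 1"
    by (simp_all add: R2_def mat_of_rows_list_def)
  have S: "S2 a b c d $$ (0,2) = 0" "S2 a b c d $$ (1,2) = 0" "S2 a b c d $$ (2,2) = 1" for a b c d
    by (simp_all add: S2_def mat_of_rows_list_def)
  show ?thesis unfolding rep_image_def
    by (intro fixed_reducible[OF en N] gens_fix[OF en(1)] loc_en[OF R] loc_en[OF S])
qed

lemma case3: assumes "n \<ge> 4" and r: "r6 \<noteq> 0"
  shows "reducible (n+1) (rep_image n (R3 r6) (\<lambda>t. S3 r6 (s4 t) (s5 t)))"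
proof -
  have N: "n + 1 \<ge> 2" using assms by simp
  have R: "R3 r6 $$ (0,0) = 1" "R3 r6 $$ (0,1) = 0" "R3 r6 $$ (0,2) = 0"
     "R3 r6 $$ (2,0) = 0" "R3 r6 $$ (2,1) = 0" "R3 r6 $$ (2,2) = 1"
     "R3 r6 $$ (1,0) * r6^2 + R3 r6 $$ (1,1) * r6 + R3 r6 $$ (1,2) = r6"
    using r by (simp_all add: R3_def mat_of_rows_list_def power2_eq_square)
  have S: "S3 r6 a b $$ (0,0) = 1" "S3 r6 a b $$ (0,1) = 0" "S3 r6 a b $$ (0,2) = 0"
     "S3 r6 a b $$ (2,0) = 0" "S3 r6 a b $$ (2,1) = 0" "S3 r6 a b $$ (2,2) = 1"
     "S3 r6 a b $$ (1,0) * r6^2 + S3 r6 a b $$ (1,1) * r6 + S3 r6 a b $$ (1,2) = r6" for a b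
    by (simp_all add: S3_def mat_of_rows_list_def power2_eq_square algebra_simps)
  show ?thesis unfolding rep_image_def
    by (intro fixed_reducible[OF vec_r_ok[of n r6] N] gens_fix[OF vec_r_ok(1)[of n r6]] loc3[OF R] loc3[OF S])
qed

theorem theorem4p2:
  fixes n :: nat
  assumes "n \<ge> 4"
  shows
   "(\<forall>(r6::complex) (s5::nat\<Rightarrow>complex) s6 s8 s9.
       r6 \<noteq> 0 \<and> (\<forall>t\<in>{1,2}. s5 t * s9 t - s6 t * s8 t \<noteq> 0)
       \<longrightarrow> reducible (n+1) (rep_image n (R1 r6) (\<lambda>t. S1 (s5 t) (s6 t) (s8 t) (s9 t))))
  \<and> (\<forall>(r2::complex) (s1::nat\<Rightarrow>complex) s2 s4 s5.
       r2 \<noteq> 0 \<and> (\<forall>t\<in>{1,2}. s1 t * s5 t - s2 t * s4 t \<noteq> 0)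
       \<longrightarrow> reducible (n+1) (rep_image n (R2 r2) (\<lambda>t. S2 (s1 t) (s2 t) (s4 t) (s5 t))))
  \<and> (\<forall>(r6::complex) (s4::nat\<Rightarrow>complex) s5.
       r6 \<noteq> 0 \<and> (\<forall>t\<in>{1,2}. s5 t \<noteq> 0)
       \<longrightarrow> reducible (n+1) (rep_image n (R3 r6) (\<lambda>t. S3 r6 (s4 t) (s5 t))))
  \<and> (\<forall>(r2::complex) (s5::nat\<Rightarrow>complex) s8.
       r2 \<noteq> 0 \<and> (\<forall>t\<in>{1,2}. s5 t \<noteq> 0)
       \<longrightarrow> reducible (n+1) (rep_image n (R4 r2) (\<lambda>t. S4 r2 (s5 t) (s8 t))))"
  apply (intro conjI allI impI)
     apply (rule case1[OF assms])
    apply (rule case2[OF assms])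
   apply (rule case3[OF assms], simp)
  apply (rule case4[OF assms])
  done

end
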